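(* Let $G_B=(V_B,E_B)$ be a graph with $n=|V_B|$ even and $m=|E_B|$, let $h\geq 0$ be an integer, and let $G=(V,E)$ be the graph constructed from $G_B$ as described in the context. Then there exists a partition of $V_B$ into two sets $V_{B,1},V_{B,2}$ with $|V_{B,1}|=|V_{B,2}|$ such that at most $h$ edges of $G_B$ have one endpoint in $V_{B,1}$ and the other in $V_{B,2}$ if and only if there exists a feasible solution of 2-Overlapping Densest Subgraphs on $G$ with $\alpha=2/3$ of total density at least $\frac{2n^2-n+m-h}{\frac{3}{2}n}$.
   Context: Construction: $G$ consists of a clique $G_c=(V_c,E_c)$ on $n$ new vertices together with a copy of $G_B$, and every vertex of $V_B$ is joined by an edge to every vertex of $V_c$; so $V=V_c\cup V_B$, $|V|=2n$. A subgraph means an induced subgraph $G[U]$ for nonempty $U$; density of a graph with vertex set $V'$ and edge set $E'$ is $|E'|/|V'|$. A feasible solution of 2-Overlapping Densest Subgraphs with parameter $\alpha=2/3$ is a pair of subgraphs $G[V_1],G[V_2]$ with $V_1\neq V_2$, $|V_1\cap V_2|\leq \frac{2}{3}|V_1|$ and $|V_1\cap V_2|\leq\frac{2}{3}|V_2|$; its total density is $\mathrm{density}(G[V_1])+\mathrm{density}(G[V_2])$. *)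

theory Defs
  imports Main "HOL-Library.Disjoint_Sets" Complex_Main
begin

definition simple_graph :: "'v set \<Rightarrow> 'v set set \<Rightarrow> bool" where
  "simple_graph V E \<longleftrightarrow> finite V \<and> (\<forall>e\<in>E. \<exists>u v. u \<in> V \<and> v \<in> V \<and> u \<noteq> v \<and> e = {u, v})"

definition induced_edges :: "'v set set \<Rightarrow> 'v set \<Rightarrow> 'v set set" where
  "induced_edges E U = {e \<in> E. e \<subseteq> U}"

definition density :: "'v set set \<Rightarrow> 'v set \<Rightarrow> real" where
  "density E U = real (card (induced_edges E U)) / real (card U)"

text \<open>The constructed graph G: a copy of G_B (tagged Inl) plus a clique on n = |V_B|
  new vertices (tagged Inr 0, ..., Inr (n-1)), with all edges between the two parts.\<close>
definition constr_V :: "'a set \<Rightarrow> ('a + nat) set" where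
  "constr_V VB = Inl ` VB \<union> Inr ` {0..<card VB}"

definition constr_E :: "'a set \<Rightarrow> 'a set set \<Rightarrow> ('a + nat) set set" where
  "constr_E VB EB =
     (\<lambda>e. Inl ` e) ` EB
     \<union> {{Inr i, Inr j} | i j. i < card VB \<and> j < card VB \<and> i \<noteq> j}
     \<union> {{Inl b, Inr i} | b i. b \<in> VB \<and> i < card VB}"

definition feasible_2ods :: "'v set \<Rightarrow> real \<Rightarrow> 'v set \<Rightarrow> 'v set \<Rightarrow> bool" where
  "feasible_2ods V \<alpha> V1 V2 \<longleftrightarrow>
     V1 \<subseteq> V \<and> V2 \<subseteq> V \<and> V1 \<noteq> {} \<and> V2 \<noteq> {} \<and> V1 \<noteq> V2 \<and>
     real (card (V1 \<inter> V2)) \<le> \<alpha> * real (card V1) \<and>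
     real (card (V1 \<inter> V2)) \<le> \<alpha> * real (card V2)"

definition cut_edges :: "'v set set \<Rightarrow> 'v set \<Rightarrow> 'v set \<Rightarrow> nat" where
  "cut_edges E A B = card {e \<in> E. \<exists>u\<in>A. \<exists>v\<in>B. e = {u, v}}"

end

theory Submission
  imports Defs
begin


definition P2 :: "'v set \<Rightarrow> 'v set set" where
  "P2 S = {e. e \<subseteq> S \<and> card e = 2}"

definition NE :: "'v set set \<Rightarrow> 'v set \<Rightarrow> nat" where
  "NE E S = card (P2 S - E)"

lemma two_choose2: "2 * (n choose 2) = n * (n - 1)"
proof -
  have "even (n * (n - 1))" by auto
  then show ?thesis by (simp add: choose_two)
qed

lemma card_P2: "finite S \<Longrightarrow> card (P2 S) = card S choose 2"
  unfolding P2_def by (rule n_subsets)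

lemma finite_P2: "finite S \<Longrightarrow> finite (P2 S)"
  unfolding P2_def by (rule finite_subset[of _ "Pow S"]) auto

lemma P2_mono: "A \<subseteq> B \<Longrightarrow> P2 A \<subseteq> P2 B"
  unfolding P2_def by auto

lemma NE_mono: "finite B \<Longrightarrow> A \<subseteq> B \<Longrightarrow> NE E A \<le> NE E B"
  unfolding NE_def by (rule card_mono) (auto simp: finite_P2 dest: P2_mono)

lemma simple_edge: "simple_graph V E \<Longrightarrow> e \<in> E \<Longrightarrow> e \<in> P2 V"
  unfolding simple_graph_def P2_def by auto

lemma induced_NE:
  assumes "simple_graph V E" "S \<subseteq> V"
  shows "card (induced_edges E S) + NE E S = card S choose 2"
proof -
  have fin: "finite S" using assms simple_graph_def finite_subset by metis
  have eq: "induced_edges E S = P2 S \<inter> E"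
    using simple_edge[OF assms(1)] unfolding induced_edges_def P2_def by auto
  have "card (P2 S \<inter> E) + card (P2 S - E) = card (P2 S)"
    using card_Int_Diff[of "P2 S" E] finite_P2[OF fin] by simp
  then show ?thesis using eq card_P2[OF fin] unfolding NE_def by simp
qed

lemma card_pairs_meeting:
  assumes "finite H"
  shows "card (P2 H - P2 (H - D)) \<le> card (H \<inter> D) * card H"
proof -
  have "P2 H - P2 (H - D) \<subseteq> (\<lambda>(d,x). {d,x}) ` ((H \<inter> D) \<times> H)"
  proof
    fix e assume e: "e \<in> P2 H - P2 (H - D)"
    then have "e \<subseteq> H" "card e = 2" "\<not> e \<subseteq> H - D" unfolding P2_def by auto
    then obtain d where d: "d \<in> e" "d \<in> D" by auto
    from \<open>card e = 2\<close> obtain x y where xy: "e = {x,y}" "x \<noteq> y" by (metis card_2_iff)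
    show "e \<in> (\<lambda>(d,x). {d,x}) ` ((H \<inter> D) \<times> H)"
    proof (cases "d = x")
      case True then show ?thesis using xy d \<open>e \<subseteq> H\<close> by (auto intro!: image_eqI[where x="(x,y)"])
    next
      case False then have "d = y" using xy d by auto
      then show ?thesis using xy d \<open>e \<subseteq> H\<close> by (auto intro!: image_eqI[where x="(y,x)"])
    qed
  qed
  then have "card (P2 H - P2 (H - D)) \<le> card ((\<lambda>(d,x). {d,x}) ` ((H \<inter> D) \<times> H))"
    by (rule card_mono[rotated]) (use assms in auto)
  also have "\<dots> \<le> card ((H \<inter> D) \<times> H)" by (rule card_image_le) (use assms in auto)
  also have "\<dots> = card (H \<inter> D) * card H" by (simp add: card_cartesian_product)
  finally show ?thesis .
qed

lemma NE_split:
  assumes "finite H"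
  shows "NE E H \<le> NE E (H \<inter> S) + card (H - S) * card H"
proof -
  have "P2 H - E \<subseteq> (P2 (H \<inter> S) - E) \<union> (P2 H - P2 (H - (H - S)))"
    unfolding P2_def by auto
  then have "NE E H \<le> card ((P2 (H \<inter> S) - E) \<union> (P2 H - P2 (H - (H - S))))"
    unfolding NE_def by (rule card_mono[rotated]) (use assms finite_P2 in auto)
  also have "\<dots> \<le> NE E (H \<inter> S) + card (P2 H - P2 (H - (H - S)))"
    unfolding NE_def by (rule card_Un_le)
  also have "card (P2 H - P2 (H - (H - S))) \<le> card (H \<inter> (H - S)) * card H"
    by (rule card_pairs_meeting[OF assms])
  also have "H \<inter> (H - S) = H - S" by auto
  finally show ?thesis by simp
qed



lemma finite_induced: "finite U \<Longrightarrow> finite (induced_edges F U)"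
  unfolding induced_edges_def by (rule finite_subset[of _ "Pow U"]) auto

lemma thin_sum:
  assumes U: "finite U" and F: "\<forall>e\<in>F. card e = 2"
  shows "(\<Sum>v\<in>U. card (induced_edges F (U - {v}))) = (card U - 2) * card (induced_edges F U)"
proof -
  let ?I = "induced_edges F U"
  have fI: "finite ?I" using finite_induced[OF U] .
  have "(\<Sum>v\<in>U. card (induced_edges F (U - {v}))) = (\<Sum>v\<in>U. \<Sum>e\<in>?I. if v \<notin> e then 1 else 0)"
  proof (rule sum.cong[OF refl])
    fix v assume "v \<in> U"
    have "induced_edges F (U - {v}) = {e\<in>?I. v \<notin> e}" unfolding induced_edges_def by auto
    moreover have "{e\<in>?I. v \<notin> e} = ?I \<inter> {e. v \<notin> e}" by auto
    ultimately show "card (induced_edges F (U - {v})) = (\<Sum>e\<in>?I. if v \<notin> e then 1 else 0)"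
      using fI by (simp add: sum.If_cases)
  qed
  also have "\<dots> = (\<Sum>e\<in>?I. \<Sum>v\<in>U. if v \<notin> e then 1 else 0)" by (rule sum.swap)
  also have "\<dots> = (\<Sum>e\<in>?I. card U - 2)"
  proof (rule sum.cong[OF refl])
    fix e assume e: "e \<in> ?I"
    then have "e \<subseteq> U" "card e = 2" using F unfolding induced_edges_def by auto
    then have "card (U - e) = card U - 2" using U by (simp add: card_Diff_subset finite_subset)
    moreover have "(\<Sum>v\<in>U. if v \<notin> e then 1 else 0) = card (U - e)"
    proof -
      have "U \<inter> {v. v \<notin> e} = U - e" by auto
      then show ?thesis using U by (simp add: sum.If_cases)
    qed
    ultimately show "(\<Sum>v\<in>U. if v \<notin> e then 1 else 0) = card U - 2" by simp
  qed
  also have "\<dots> = (card U - 2) * card ?I" by simp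
  finally show ?thesis .
qed

lemma thin_step:
  assumes U: "finite U" "U \<noteq> {}" and F: "\<forall>e\<in>F. card e = 2"
  shows "\<exists>v\<in>U. card (induced_edges F U) * (card U - 2) \<le> card (induced_edges F (U - {v})) * card U"
proof (rule ccontr)
  assume "\<not> ?thesis"
  then have lt: "\<And>v. v \<in> U \<Longrightarrow> card (induced_edges F (U - {v})) * card U < card (induced_edges F U) * (card U - 2)"
    by (simp add: not_le)
  have "(\<Sum>v\<in>U. card (induced_edges F (U - {v})) * card U) < (\<Sum>v\<in>U. card (induced_edges F U) * (card U - 2))"
    by (rule sum_strict_mono) (use U lt in auto)
  also have "\<dots> = card U * (card (induced_edges F U) * (card U - 2))" by simp
  also have "(\<Sum>v\<in>U. card (induced_edges F (U - {v})) * card U) = card U * ((card U - 2) * card (induced_edges F U))"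
  proof -
    have "(\<Sum>v\<in>U. card (induced_edges F (U - {v})) * card U) = (\<Sum>v\<in>U. card (induced_edges F (U - {v}))) * card U"
      by (rule sum_distrib_right[symmetric])
    then show ?thesis using thin_sum[OF U(1) F] by simp
  qed
  finally show False by (simp add: mult.commute mult.left_commute)
qed

lemma thin:
  assumes F: "\<forall>e\<in>F. card e = 2"
  shows "finite U \<Longrightarrow> s \<le> card U \<Longrightarrow> 2 \<le> s \<Longrightarrow>
    \<exists>U'\<subseteq>U. card U' = s \<and> card (induced_edges F U) * (s * (s - 1)) \<le> card (induced_edges F U') * (card U * (card U - 1))"
proof (induction "card U - s" arbitrary: U)
  case 0
  then have "card U = s" by simp
  then show ?case by (intro exI[of _ U]) auto
next
  case (Suc d)
  let ?N = "card U"
  have ne: "U \<noteq> {}" using Suc.prems Suc.hyps(2) by auto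
  obtain v where v: "v \<in> U" and hv: "card (induced_edges F U) * (?N - 2) \<le> card (induced_edges F (U - {v})) * ?N"
    using thin_step[OF Suc.prems(1) ne F] by blast
  have cU': "card (U - {v}) = ?N - 1" using v Suc.prems(1) by simp
  have "d = card (U - {v}) - s" using Suc.hyps(2) cU' by simp
  then obtain U' where U': "U' \<subseteq> U - {v}" "card U' = s"
    and h': "card (induced_edges F (U - {v})) * (s * (s - 1)) \<le> card (induced_edges F U') * (card (U - {v}) * (card (U - {v}) - 1))"
  proof -
    have "s \<le> card (U - {v})" using cU' Suc.hyps(2) by linarith
    from Suc.hyps(1)[OF \<open>d = card (U - {v}) - s\<close> _ this Suc.prems(3)] Suc.prems(1)
    show ?thesis using that by blast
  qed
  have N3: "?N \<ge> 3" using Suc.hyps(2) Suc.prems by linarith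
  define M where "M = ?N - 2"
  have NM: "?N = M + 2" using N3 unfolding M_def by simp
  define a where "a = card (induced_edges F U)"
  define b where "b = card (induced_edges F (U - {v}))"
  define c where "c = card (induced_edges F U')"
  have h1: "a * M \<le> b * (M + 2)" using hv unfolding a_def b_def by (simp add: NM)
  have cU'': "card (U - {v}) = M + 1" using cU' NM by simp
  have h2: "b * (s * (s - 1)) \<le> c * ((M + 1) * M)" using h' unfolding b_def c_def by (simp add: cU'')
  have "a * (s * (s - 1)) * M \<le> b * (M + 2) * (s * (s - 1))"
    using mult_right_mono[OF h1, of "s * (s - 1)"] by (simp add: ac_simps)
  also have "\<dots> = (b * (s * (s - 1))) * (M + 2)" by (simp only: ac_simps)
  also have "\<dots> \<le> (c * ((M + 1) * M)) * (M + 2)" by (rule mult_right_mono[OF h2]) simp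
  also have "\<dots> = (c * ((M + 2) * (M + 1))) * M" by (simp add: algebra_simps)
  finally have X: "(a * (s * (s - 1))) * M \<le> (c * ((M + 2) * (M + 1))) * M" .
  have "M > 0" using N3 NM by simp
  then have "a * (s * (s - 1)) \<le> c * ((M + 2) * (M + 1))"
    using X mult_le_cancel2 by blast
  then have "card (induced_edges F U) * (s * (s - 1)) \<le> card (induced_edges F U') * (?N * (?N - 1))"
    unfolding a_def c_def by (simp add: NM)
  then show ?case using U' by blast
qed



lemma core:
  fixes VB S1 S2 :: "'a set" and hh a1 a2 c t :: nat
  assumes fin: "finite VB" and cn: "card VB = 2*hh" and sub1: "S1 \<subseteq> VB" and sub2: "S2 \<subseteq> VB"
    and a1n: "a1 \<le> 2*hh" and a2n: "a2 \<le> 2*hh" and aa: "a1 + a2 \<le> 2*hh + c"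
    and J1: "3*(c + card (S1\<inter>S2)) \<le> 2*(a1 + card S1)"
    and J2: "3*(c + card (S1\<inter>S2)) \<le> 2*(a2 + card S2)"
    and ord: "a2 + card S2 \<le> a1 + card S1" and top: "a1 + card S1 \<le> 3*hh"
    and tc: "t = 0 \<or> (a1 + card S1 = 3*hh \<and> 3*t + a2 + card S2 \<le> 3*hh)"
  shows "\<exists>H\<subseteq>VB. card H = hh \<and>
    2*(card (H - S1) + card (VB - H - S2)) + 3*(a1 + card S1 + a2 + card S2 + t) \<le> 18*hh"
proof -
  have f1: "finite S1" using fin sub1 finite_subset by blast
  have f2: "finite S2" using fin sub2 finite_subset by blast
  define X where "X = S1 - S2"
  define Y where "Y = S2 - S1"
  define Z where "Z = VB - (S1 \<union> S2)"
  define r where "r = card (S1 \<inter> S2)"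
  define p where "p = card X"
  define q where "q = card Y"
  define z where "z = card Z"
  have b1: "card S1 = p + r" unfolding p_def r_def X_def using card_Int_Diff[OF f1, of S2] by simp
  have b2: "card S2 = q + r" unfolding q_def r_def Y_def using card_Int_Diff[OF f2, of S1] by (simp add: Int_commute)
  have cU: "card (S1 \<union> S2) + r = p + r + q + r" using card_Un_Int[OF f1 f2] b1 b2 r_def by simp
  have cZ: "z + card (S1 \<union> S2) = 2*hh" unfolding z_def Z_def using card_Diff_subset[of "S1 \<union> S2" VB] f1 f2 sub1 sub2 cn
    card_mono[OF fin, of "S1 \<union> S2"] by simp
  have sum: "p + q + r + z = 2*hh" using cU cZ by simp
  have cVS1: "card (VB - S1) = q + z" using card_Diff_subset[OF f1 sub1] cn b1 sum by simp
  have cVS2: "card (VB - S2) = p + z" using card_Diff_subset[OF f2 sub2] cn b2 sum by simp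
  have fX: "finite X" unfolding X_def using f1 by simp
  have fY: "finite Y" unfolding Y_def using f2 by simp
  have fZ: "finite Z" unfolding Z_def using fin by simp
  consider (I) "p > hh" | (II) "q > hh" | (III) "p \<le> hh" "q \<le> hh" by linarith
  then show ?thesis
  proof cases
    case I
    obtain H where H: "H \<subseteq> X" "card H = hh" using obtain_subset_with_card_n[of hh X] I p_def by auto
    have "H \<subseteq> VB" using H sub1 unfolding X_def by auto
    have "H - S1 = {}" using H unfolding X_def by auto
    then have e1: "card (H - S1) = 0" by (metis card.empty)
    have "H \<subseteq> VB - S2" using H sub1 unfolding X_def by auto
    moreover have "VB - H - S2 = (VB - S2) - H" by auto
    ultimately have e2: "card (VB - H - S2) = p + z - hh"
      using card_Diff_subset[of H "VB - S2"] H cVS2 fX finite_subset[OF H(1)] by simp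
    define w where "w = p + z - hh"
    have pz: "w + hh = p + z" using I unfolding w_def by simp
    have "2*w + 3*(a1 + card S1 + a2 + card S2 + t) \<le> 18*hh"
    proof (cases "t = 0")
      case True then show ?thesis using pz J2 aa a2n b1 b2 sum I unfolding r_def[symmetric] unfolding distrib_left by linarith
    next
      case False then have "a1 + card S1 = 3*hh" "3*t + a2 + card S2 \<le> 3*hh" using tc by auto
      then show ?thesis using pz a2n b2 sum I unfolding distrib_left by linarith
    qed
    then show ?thesis using e1 e2 H \<open>H \<subseteq> VB\<close> unfolding w_def by (intro exI[of _ H]) simp
  next
    case II
    obtain T where T: "T \<subseteq> Y" "card T = hh" using obtain_subset_with_card_n[of hh Y] II q_def by auto
    have fT: "finite T" using fY T finite_subset by blast
    define H where "H = VB - T"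
    have TV: "T \<subseteq> VB" using T sub2 unfolding Y_def by auto
    have HV: "H \<subseteq> VB" unfolding H_def by auto
    have cH: "card H = hh" unfolding H_def using card_Diff_subset[OF fT TV] cn T by simp
    have "VB - H - S2 = {}" using T TV unfolding H_def Y_def by auto
    then have e1: "card (VB - H - S2) = 0" by (metis card.empty)
    have "T \<subseteq> VB - S1" using T TV unfolding Y_def by auto
    moreover have "H - S1 = (VB - S1) - T" unfolding H_def by auto
    ultimately have e2: "card (H - S1) = q + z - hh"
      using card_Diff_subset[OF fT, of "VB - S1"] T cVS1 by simp
    define w where "w = q + z - hh"
    have qz: "w + hh = q + z" using II unfolding w_def by simp
    have "2*w + 3*(a1 + card S1 + a2 + card S2 + t) \<le> 18*hh"
    proof (cases "t = 0")
      case True then show ?thesis using qz J1 aa a1n b1 b2 sum II unfolding r_def[symmetric] unfolding distrib_left by linarith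
    next
      case False then have "a1 + card S1 = 3*hh" using tc by auto
      then show ?thesis using a1n b1 sum II unfolding distrib_left by linarith
    qed
    then show ?thesis using e1 e2 cH HV unfolding w_def by (intro exI[of _ H]) simp
  next
    case III
    have "hh - p \<le> card (VB - X - Y)"
    proof -
      have "VB - X - Y = (S1 \<inter> S2) \<union> Z" unfolding X_def Y_def Z_def using sub1 sub2 by auto
      moreover have "card ((S1 \<inter> S2) \<union> Z) = r + z"
        using card_Un_disjoint[of "S1 \<inter> S2" Z] f1 fZ unfolding r_def z_def by (auto simp: Z_def)
      ultimately show ?thesis using III sum by simp
    qed
    then obtain W where W: "W \<subseteq> VB - X - Y" "card W = hh - p"
      using obtain_subset_with_card_n by metis
    have fW: "finite W" using W fin finite_subset by blast
    define H where "H = X \<union> W"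
    have HV: "H \<subseteq> VB" unfolding H_def X_def using W sub1 by auto
    have cH: "card H = hh" unfolding H_def using card_Un_disjoint[OF fX fW] W III p_def by auto
    have e1: "H - S1 = W \<inter> Z" unfolding H_def X_def Z_def using W unfolding X_def Y_def by auto
    have e2: "VB - H - S2 = Z - W" unfolding H_def X_def Z_def using W by auto
    have "card (W \<inter> Z) + card (Z - W) = z"
      using card_Int_Diff[OF fZ, of W] unfolding z_def by (simp add: Int_commute)
    then have w: "card (H - S1) + card (VB - H - S2) = z" using e1 e2 by simp
    have "2*z + 3*(a1 + card S1 + a2 + card S2 + t) \<le> 18*hh"
    proof (cases "t = 0")
      case True then show ?thesis using J1 J2 aa b1 b2 sum unfolding r_def[symmetric] unfolding distrib_left by linarith
    next
      case False then have "a1 + card S1 = 3*hh" "3*t + a2 + card S2 \<le> 3*hh" using tc by auto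
      then show ?thesis using J1 J2 aa b1 b2 sum unfolding r_def[symmetric] unfolding distrib_left by linarith
    qed
    then show ?thesis using w cH HV by (intro exI[of _ H]) simp
  qed
qed



definition SV :: "('a + nat) set \<Rightarrow> 'a set" where "SV U = {b. Inl b \<in> U}"
definition AV :: "('a + nat) set \<Rightarrow> nat set" where "AV U = {i. Inr i \<in> U}"

lemma U_decomp: "U = Inl ` SV U \<union> Inr ` AV U"
  unfolding SV_def AV_def by (auto intro: sum.exhaust_sel) (metis sum.exhaust image_eqI mem_Collect_eq)

lemma SV_sub: "U \<subseteq> constr_V VB \<Longrightarrow> SV U \<subseteq> VB"
  unfolding SV_def constr_V_def by auto

lemma AV_sub: "U \<subseteq> constr_V VB \<Longrightarrow> AV U \<subseteq> {0..<card VB}"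
  unfolding AV_def constr_V_def by auto

lemma card_decomp:
  fixes U :: "('a + nat) set"
  assumes "finite (SV U)" "finite (AV U)"
  shows "card U = card (SV U) + card (AV U)"
proof -
  have d: "(Inl ` SV U :: ('a + nat) set) \<inter> Inr ` AV U = {}" by auto
  have "card U = card (Inl ` SV U \<union> Inr ` AV U)" using U_decomp[of U] by simp
  also have "\<dots> = card (Inl ` SV U :: ('a + nat) set) + card (Inr ` AV U :: ('a + nat) set)"
    using card_Un_disjoint[OF _ _ d] assms by auto
  also have "\<dots> = card (SV U) + card (AV U)" by (simp add: card_image)
  finally show ?thesis .
qed

lemma SV_Int: "SV (U1 \<inter> U2) = SV U1 \<inter> SV U2" unfolding SV_def by auto
lemma AV_Int: "AV (U1 \<inter> U2) = AV U1 \<inter> AV U2" unfolding AV_def by auto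
lemma SV_mono: "U1 \<subseteq> U2 \<Longrightarrow> SV U1 \<subseteq> SV U2" unfolding SV_def by auto
lemma AV_mono: "U1 \<subseteq> U2 \<Longrightarrow> AV U1 \<subseteq> AV U2" unfolding AV_def by auto

lemma finite_constr_V: "finite VB \<Longrightarrow> finite (constr_V VB)"
  unfolding constr_V_def by simp

lemma card_constr_V: "finite VB \<Longrightarrow> card (constr_V VB) = 2 * card VB"
  unfolding constr_V_def by (subst card_Un_disjoint) (auto simp: card_image)

lemma constr_E_card2:
  assumes "simple_graph VB EB"
  shows "\<forall>e\<in>constr_E VB EB. card e = 2"
proof
  fix e assume "e \<in> constr_E VB EB"
  then consider (a) e' where "e' \<in> EB" "e = Inl ` e'"
    | (b) i j where "e = {Inr i, Inr j}" "i \<noteq> j"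
    | (c) b i where "e = {Inl b, Inr i}"
    unfolding constr_E_def by blast
  then show "card e = 2"
  proof cases
    case a
    then have "card e' = 2" using simple_edge[OF assms] unfolding P2_def by auto
    then show ?thesis using a by (simp add: card_image)
  qed auto
qed

lemma inj_Inl_img: "inj (\<lambda>e::'a set. (Inl ` e :: ('a + 'b) set))"
  by (rule injI) (simp add: inj_image_eq_iff)

lemma constr_edges:
  assumes sg: "simple_graph VB EB" and U: "U \<subseteq> constr_V VB"
  shows "card (induced_edges (constr_E VB EB) U) + NE EB (SV U) = card U choose 2"
proof -
  have finVB: "finite VB" using sg unfolding simple_graph_def by simp
  have finU: "finite U" using U finite_constr_V[OF finVB] finite_subset by blast
  define S where "S = SV U"
  have SVB: "S \<subseteq> VB" using SV_sub[OF U] unfolding S_def .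
  have finS: "finite S" using SVB finVB finite_subset by blast
  define T where "T = (\<lambda>e. (Inl ` e :: ('a + nat) set)) ` (P2 S - EB)"
  have Tsub: "T \<subseteq> P2 U"
  proof
    fix x assume "x \<in> T"
    then obtain e where e: "e \<in> P2 S" "x = Inl ` e" unfolding T_def by auto
    then show "x \<in> P2 U" unfolding P2_def S_def SV_def by (auto simp: card_image)
  qed
  have cT: "card T = NE EB S"
    unfolding T_def NE_def by (rule card_image) (rule inj_on_subset[OF inj_Inl_img], simp)
  have eq: "induced_edges (constr_E VB EB) U = P2 U - T"
  proof (intro equalityI subsetI)
    fix x assume x: "x \<in> induced_edges (constr_E VB EB) U"
    then have xE: "x \<in> constr_E VB EB" and xU: "x \<subseteq> U" unfolding induced_edges_def by auto
    have "card x = 2" using constr_E_card2[OF sg] xE by blast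
    then have "x \<in> P2 U" using xU unfolding P2_def by simp
    moreover have "x \<notin> T"
    proof
      assume "x \<in> T"
      then obtain e where e: "e \<in> P2 S" "e \<notin> EB" "x = Inl ` e" unfolding T_def by auto
      from xE consider (a) e' where "e' \<in> EB" "x = Inl ` e'"
        | (b) i j where "x = {Inr i, Inr j}"
        | (c) b i where "x = {Inl b, Inr i}"
        unfolding constr_E_def by blast
      then show False
      proof cases
        case a then have "e = e'" using e inj_Inl_img by (metis injD)
        then show False using a e by simp
      next
        case b then show False using e by auto
      next
        case c then show False using e by auto
      qed
    qed
    ultimately show "x \<in> P2 U - T" by simp
  next
    fix x assume x: "x \<in> P2 U - T"
    then have xU: "x \<subseteq> U" and c2: "card x = 2" and xT: "x \<notin> T" unfolding P2_def by auto
    from c2 obtain u v where uv: "x = {u, v}" "u \<noteq> v" by (metis card_2_iff)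
    have uU: "u \<in> constr_V VB" "v \<in> constr_V VB" using uv xU U by auto
    have "x \<in> constr_E VB EB"
    proof (cases u)
      case (Inl a)
      show ?thesis
      proof (cases v)
        case (Inl b)
        have ab: "{a, b} \<in> P2 S" using uv xU Inl \<open>u = Inl a\<close> unfolding P2_def S_def SV_def by (auto simp: card_2_iff)
        have xi: "x = Inl ` {a, b}" using uv Inl \<open>u = Inl a\<close> by auto
        have "{a, b} \<in> EB"
        proof (rule ccontr)
          assume "{a, b} \<notin> EB"
          then have "x \<in> T" using ab xi unfolding T_def by blast
          with xT show False by simp
        qed
        then show ?thesis using xi unfolding constr_E_def by blast
      next
        case (Inr j)
        have "a \<in> VB" "j < card VB" using uU \<open>u = Inl a\<close> Inr unfolding constr_V_def by auto
        then show ?thesis using uv \<open>u = Inl a\<close> Inr unfolding constr_E_def by blast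
      qed
    next
      case (Inr i)
      show ?thesis
      proof (cases v)
        case (Inl b)
        have "b \<in> VB" "i < card VB" using uU \<open>u = Inr i\<close> Inl unfolding constr_V_def by auto
        then have "{Inl b, Inr i} \<in> constr_E VB EB" unfolding constr_E_def by blast
        moreover have "x = {Inl b, Inr i}" using uv \<open>u = Inr i\<close> Inl by auto
        ultimately show ?thesis by simp
      next
        case (Inr j)
        have "i < card VB" "j < card VB" "i \<noteq> j" using uU uv \<open>u = Inr i\<close> Inr unfolding constr_V_def by auto
        then show ?thesis using uv \<open>u = Inr i\<close> Inr unfolding constr_E_def by blast
      qed
    qed
    then show "x \<in> induced_edges (constr_E VB EB) U" using xU unfolding induced_edges_def by simp
  qed
  have "card (P2 U - T) + card T = card (P2 U)"
    using card_Diff_subset[OF finite_subset[OF Tsub finite_P2[OF finU]] Tsub]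
      card_mono[OF finite_P2[OF finU] Tsub] by simp
  then show ?thesis using eq cT card_P2[OF finU] unfolding S_def by simp
qed



lemma cut_eq:
  assumes sg: "simple_graph VB EB" and H: "H \<subseteq> VB"
  shows "card EB = card (induced_edges EB H) + card (induced_edges EB (VB - H)) + cut_edges EB H (VB - H)"
proof -
  have finVB: "finite VB" using sg unfolding simple_graph_def by simp
  have EBsub: "EB \<subseteq> P2 VB" using simple_edge[OF sg] by blast
  have finEB: "finite EB" using finite_subset[OF EBsub finite_P2[OF finVB]] .
  define C where "C = {e \<in> EB. \<exists>u\<in>H. \<exists>v\<in>VB - H. e = {u, v}}"
  have fin: "finite (induced_edges EB H)" "finite (induced_edges EB (VB - H))" "finite C"
    using finEB unfolding induced_edges_def C_def by auto
  have un: "EB = induced_edges EB H \<union> induced_edges EB (VB - H) \<union> C"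
  proof (intro equalityI subsetI)
    fix e assume e: "e \<in> EB"
    then obtain u v where uv: "u \<in> VB" "v \<in> VB" "u \<noteq> v" "e = {u, v}"
      using sg unfolding simple_graph_def by blast
    show "e \<in> induced_edges EB H \<union> induced_edges EB (VB - H) \<union> C"
    proof (cases "u \<in> H"; cases "v \<in> H")
      assume "u \<in> H" "v \<in> H" then show ?thesis using e uv unfolding induced_edges_def by auto
    next
      assume "u \<in> H" "v \<notin> H" then show ?thesis using e uv unfolding C_def by auto
    next
      assume "u \<notin> H" "v \<in> H" then have "e = {v, u}" using uv by auto
      then show ?thesis using e uv \<open>u \<notin> H\<close> \<open>v \<in> H\<close> unfolding C_def by blast
    next
      assume "u \<notin> H" "v \<notin> H" then show ?thesis using e uv unfolding induced_edges_def by auto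
    qed
  qed (auto simp: induced_edges_def C_def)
  have ne: "\<And>e. e \<in> EB \<Longrightarrow> e \<noteq> {}" using sg unfolding simple_graph_def by auto
  have d1: "induced_edges EB H \<inter> induced_edges EB (VB - H) = {}"
    using ne unfolding induced_edges_def by blast
  have d2: "(induced_edges EB H \<union> induced_edges EB (VB - H)) \<inter> C = {}"
    unfolding induced_edges_def C_def by blast
  have "card EB = card (induced_edges EB H \<union> induced_edges EB (VB - H)) + card C"
    using un card_Un_disjoint[OF _ fin(3) d2] fin by simp
  also have "card (induced_edges EB H \<union> induced_edges EB (VB - H)) = card (induced_edges EB H) + card (induced_edges EB (VB - H))"
    using card_Un_disjoint[OF fin(1,2) d1] .
  finally show ?thesis unfolding cut_edges_def C_def by simp
qed

lemma real_choose2: "real (x choose 2) = real x * (real x - 1) / 2"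
proof -
  have "real (2 * (x choose 2)) = real (x * (x - 1))" by (simp only: two_choose2)
  then show ?thesis by (cases x) (auto simp: algebra_simps of_nat_diff)
qed



lemma fwd:
  assumes sg: "simple_graph VB EB" and u: "VB1 \<union> VB2 = VB" and d: "VB1 \<inter> VB2 = {}"
    and ne1: "VB1 \<noteq> {}" and ne2: "VB2 \<noteq> {}" and cc: "card VB1 = card VB2"
    and cut: "cut_edges EB VB1 VB2 \<le> h"
  shows "\<exists>V1 V2. feasible_2ods (constr_V VB) (2/3) V1 V2 \<and>
        density (constr_E VB EB) V1 + density (constr_E VB EB) V2
          \<ge> (2 * real (card VB)^2 - real (card VB) + real (card EB) - real h)
              / (3/2 * real (card VB))"
proof -
  have finVB: "finite VB" using sg unfolding simple_graph_def by simp
  have f1: "finite VB1" "finite VB2" using finVB u by auto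
  define k where "k = card VB1"
  have n: "card VB = 2 * k" using card_Un_disjoint[OF f1 d] u cc unfolding k_def by simp
  have k1: "k \<ge> 1" using ne1 f1 unfolding k_def by (simp add: Suc_le_eq card_gt_0_iff)
  define Cl where "Cl = (Inr ` {0..<card VB} :: ('a + nat) set)"
  define V1 where "V1 = Inl ` VB1 \<union> Cl"
  define V2 where "V2 = Inl ` VB2 \<union> Cl"
  have SV1: "SV V1 = VB1" "AV V1 = {0..<card VB}" unfolding V1_def Cl_def SV_def AV_def by auto
  have SV2: "SV V2 = VB2" "AV V2 = {0..<card VB}" unfolding V2_def Cl_def SV_def AV_def by auto
  have cV1: "card V1 = 3 * k" using card_decomp[of V1] SV1 f1 n unfolding k_def by simp
  have cV2: "card V2 = 3 * k" using card_decomp[of V2] SV2 f1 n cc unfolding k_def by simp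
  have I: "V1 \<inter> V2 = Cl" unfolding V1_def V2_def Cl_def using d by auto
  have cI: "card (V1 \<inter> V2) = 2 * k" using I n unfolding Cl_def by (simp add: card_image)
  have sub1: "V1 \<subseteq> constr_V VB" unfolding V1_def Cl_def constr_V_def using u by auto
  have sub2: "V2 \<subseteq> constr_V VB" unfolding V2_def Cl_def constr_V_def using u by auto
  obtain b where b: "b \<in> VB1" using ne1 by auto
  have "Inl b \<in> V1" "Inl b \<notin> V2" using b d unfolding V1_def V2_def Cl_def by auto
  then have neq: "V1 \<noteq> V2" by auto
  have fea: "feasible_2ods (constr_V VB) (2/3) V1 V2"
    unfolding feasible_2ods_def using sub1 sub2 neq cI cV1 cV2 k1
    by (auto simp: V1_def V2_def)
  have E1: "card (induced_edges (constr_E VB EB) V1) + NE EB VB1 = 3 * k choose 2"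
    using constr_edges[OF sg sub1] SV1 cV1 by simp
  have E2: "card (induced_edges (constr_E VB EB) V2) + NE EB VB2 = 3 * k choose 2"
    using constr_edges[OF sg sub2] SV2 cV2 by simp
  have VB2e: "VB - VB1 = VB2" using u d by auto
  have m: "card EB = card (induced_edges EB VB1) + card (induced_edges EB VB2) + cut_edges EB VB1 VB2"
    using cut_eq[OF sg, of VB1] u VB2e by auto
  have e1: "card (induced_edges EB VB1) + NE EB VB1 = k choose 2" using induced_NE[OF sg, of VB1] u unfolding k_def by auto
  have e2: "card (induced_edges EB VB2) + NE EB VB2 = k choose 2" using induced_NE[OF sg, of VB2] u cc unfolding k_def by auto
  define x1 where "x1 = real (card (induced_edges (constr_E VB EB) V1))"
  define x2 where "x2 = real (card (induced_edges (constr_E VB EB) V2))"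
  have rE1: "x1 + real (NE EB VB1) = real (3*k) * (real (3*k) - 1) / 2"
    using arg_cong[OF E1, of real] unfolding x1_def real_choose2 by simp
  have rE2: "x2 + real (NE EB VB2) = real (3*k) * (real (3*k) - 1) / 2"
    using arg_cong[OF E2, of real] unfolding x2_def real_choose2 by simp
  have re1: "real (card (induced_edges EB VB1)) + real (NE EB VB1) = real k * (real k - 1) / 2"
    using arg_cong[OF e1, of real] unfolding real_choose2 by simp
  have re2: "real (card (induced_edges EB VB2)) + real (NE EB VB2) = real k * (real k - 1) / 2"
    using arg_cong[OF e2, of real] unfolding real_choose2 by simp
  have rm: "real (card EB) = real (card (induced_edges EB VB1)) + real (card (induced_edges EB VB2)) + real (cut_edges EB VB1 VB2)"
    using arg_cong[OF m, of real] by simp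
  have rc: "real (cut_edges EB VB1 VB2) \<le> real h" using cut by simp
  have key: "2 * real (card VB)^2 - real (card VB) + real (card EB) - real h \<le> x1 + x2"
    using rE1 rE2 re1 re2 rm rc n by (simp add: algebra_simps power2_eq_square)
  have pos: "3/2 * real (card VB) = real (3 * k)" using n by simp
  have "(2 * real (card VB)^2 - real (card VB) + real (card EB) - real h) / (3/2 * real (card VB))
      \<le> (x1 + x2) / real (3 * k)" unfolding pos by (rule divide_right_mono[OF key]) simp
  also have "\<dots> = density (constr_E VB EB) V1 + density (constr_E VB EB) V2"
    unfolding density_def x1_def x2_def cV1 cV2 by (simp add: add_divide_distrib)
  finally show ?thesis using fea by blast
qed



lemma dens_bound1:
  fixes x N s K :: real
  assumes "s > 0" "x + N = s * (s - 1) / 2" "N \<ge> 0" "s \<le> K"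
  shows "K * (x / s) \<le> K * (s - 1) / 2 - N"
proof -
  have xe: "x = s * (s - 1) / 2 - N" using assms(2) by linarith
  have "K * (x / s) = K * (s - 1) / 2 - K * N / s"
    unfolding xe using assms(1) by (simp add: field_simps)
  moreover have "N \<le> K * N / s"
  proof -
    have h: "N * s \<le> K * N" using mult_left_mono[OF assms(4) assms(3)] by (simp add: mult.commute)
    then show ?thesis using assms(1) by (simp add: field_simps)
  qed
  ultimately show ?thesis by linarith
qed

lemma dens_bound2:
  fixes x x' N s K :: real
  assumes K: "K \<ge> 2" and s: "s > K" and N: "N \<ge> 0"
    and th: "x * (K * (K - 1)) \<le> x' * (s * (s - 1))" and x': "x' + N = K * (K - 1) / 2"
  shows "K * (x / s) \<le> K * (s - 1) / 2 - N"
proof -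
  have sp: "s > 0" using K s by linarith
  have K1: "K - 1 > 0" using K by linarith
  have "K * x * (K - 1) \<le> x' * s * (s - 1)" using th by (simp add: algebra_simps)
  then have "K * x \<le> x' * s * (s - 1) / (K - 1)" using K1 by (simp add: field_simps)
  also have "\<dots> = K * s * (s - 1) / 2 - N * s * ((s - 1) / (K - 1))"
  proof -
    have xe: "x' = K * (K - 1) / 2 - N" using x' by linarith
    show ?thesis unfolding xe using K1 by (simp add: field_simps)
  qed
  also have "N * s * ((s - 1) / (K - 1)) \<ge> N * s"
  proof -
    have "(s - 1) / (K - 1) \<ge> 1" using K1 s by (simp add: field_simps)
    moreover have "N * s \<ge> 0" using N sp by simp
    ultimately have "N * s * 1 \<le> N * s * ((s - 1) / (K - 1))" by (rule mult_left_mono)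
    then show ?thesis by simp
  qed
  then have "K * s * (s - 1) / 2 - N * s * ((s - 1) / (K - 1)) \<le> K * s * (s - 1) / 2 - N * s" by linarith
  finally have "K * x \<le> s * (K * (s - 1) / 2 - N)" by (simp add: algebra_simps)
  then show ?thesis using sp by (simp add: field_simps)
qed



lemma rev_dir:
  fixes VB :: "'a set" and EB :: "'a set set" and h :: nat
  assumes sg: "simple_graph VB EB" and ev: "even (card VB)"
    and fe: "feasible_2ods (constr_V VB) (2/3) V1 V2" and ord: "card V2 \<le> card V1"
    and dens: "density (constr_E VB EB) V1 + density (constr_E VB EB) V2
          \<ge> (2 * real (card VB)^2 - real (card VB) + real (card EB) - real h)
              / (3/2 * real (card VB))"
  shows "\<exists>VB1 VB2. VB1 \<union> VB2 = VB \<and> VB1 \<inter> VB2 = {} \<and> VB1 \<noteq> {} \<and> VB2 \<noteq> {} \<and>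
            card VB1 = card VB2 \<and> cut_edges EB VB1 VB2 \<le> h"
proof -
  let ?cE = "constr_E VB EB"
  have finVB: "finite VB" using sg unfolding simple_graph_def by simp
  have finV: "finite (constr_V VB)" using finite_constr_V[OF finVB] .
  have sub1: "V1 \<subseteq> constr_V VB" and sub2: "V2 \<subseteq> constr_V VB" and ne1: "V1 \<noteq> {}" and ne2: "V2 \<noteq> {}"
    and fJ1: "real (card (V1 \<inter> V2)) \<le> 2/3 * real (card V1)"
    and fJ2: "real (card (V1 \<inter> V2)) \<le> 2/3 * real (card V2)"
    using fe unfolding feasible_2ods_def by auto
  have finV1: "finite V1" and finV2: "finite V2" using sub1 sub2 finV finite_subset by auto
  have "card VB \<noteq> 0"
  proof
    assume "card VB = 0"
    then have "VB = {}" using finVB by simp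
    then have "constr_V VB = {}" unfolding constr_V_def by simp
    then show False using sub1 ne1 by simp
  qed
  moreover obtain hh where n: "card VB = 2 * hh" using ev by (rule evenE)
  ultimately have hh1: "hh \<ge> 1" by simp
  define s1 where "s1 = card V1"
  define s2 where "s2 = card V2"
  define J where "J = card (V1 \<inter> V2)"
  have J1: "3 * J \<le> 2 * s1" using fJ1 unfolding J_def s1_def by linarith
  have J2: "3 * J \<le> 2 * s2" using fJ2 unfolding J_def s2_def by linarith
  have un: "s1 + s2 \<le> 4 * hh + J"
  proof -
    have "card (V1 \<union> V2) \<le> card (constr_V VB)" using sub1 sub2 finV by (intro card_mono) auto
    then have "card (V1 \<union> V2) \<le> 4 * hh" using card_constr_V[OF finVB] n by simp
    then show ?thesis using card_Un_Int[OF finV1 finV2] unfolding s1_def s2_def J_def by simp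
  qed
  have ord': "s2 \<le> s1" using ord unfolding s1_def s2_def .
  have cE2: "\<forall>e\<in>?cE. card e = 2" using constr_E_card2[OF sg] .
  define K where "K = 3 * hh"
  have K2: "2 \<le> K" using hh1 unfolding K_def by simp
  define \<sigma> where "\<sigma> = min s1 K"
  define t where "t = s1 - \<sigma>"
  obtain U1 where U1: "U1 \<subseteq> V1" "card U1 = \<sigma>"
    and thinc: "K < s1 \<Longrightarrow> card (induced_edges ?cE V1) * (K * (K - 1)) \<le> card (induced_edges ?cE U1) * (s1 * (s1 - 1))"
    and same: "s1 \<le> K \<Longrightarrow> U1 = V1"
  proof (cases "s1 \<le> K")
    case True then show ?thesis using that[of V1] unfolding \<sigma>_def s1_def by simp
  next
    case False
    obtain U where "U \<subseteq> V1" "card U = K" "card (induced_edges ?cE V1) * (K * (K - 1)) \<le> card (induced_edges ?cE U) * (card V1 * (card V1 - 1))"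
      using thin[OF cE2 finV1, of K] False K2 unfolding s1_def by auto
    then show ?thesis using that[of U] False unfolding \<sigma>_def s1_def by simp
  qed
  have finU1: "finite U1" using U1 finV1 finite_subset by blast
  have U1sub: "U1 \<subseteq> constr_V VB" using U1 sub1 by auto
  have big: "K < s1 \<Longrightarrow> J + 2 * s1 \<le> 8 * hh \<and> s2 + 3 * s1 \<le> 12 * hh" using J2 un by linarith
  define S1 where "S1 = SV U1"
  define S2 where "S2 = SV V2"
  define A1 where "A1 = AV U1"
  define A2 where "A2 = AV V2"
  have S1VB: "S1 \<subseteq> VB" unfolding S1_def using SV_sub[OF U1sub] .
  have S2VB: "S2 \<subseteq> VB" unfolding S2_def using SV_sub[OF sub2] .
  have A1n: "A1 \<subseteq> {0..<card VB}" unfolding A1_def using AV_sub[OF U1sub] .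
  have A2n: "A2 \<subseteq> {0..<card VB}" unfolding A2_def using AV_sub[OF sub2] .
  have fS1: "finite S1" using S1VB finVB finite_subset by blast
  have fS2: "finite S2" using S2VB finVB finite_subset by blast
  have fA1: "finite A1" using A1n finite_subset by blast
  have fA2: "finite A2" using A2n finite_subset by blast
  have cU1: "\<sigma> = card S1 + card A1" using card_decomp[of U1] fS1 fA1 U1 unfolding S1_def A1_def by simp
  have cV2: "s2 = card S2 + card A2" using card_decomp[of V2] fS2 fA2 unfolding S2_def A2_def s2_def by simp
  have cI: "card (U1 \<inter> V2) = card (S1 \<inter> S2) + card (A1 \<inter> A2)"
    using card_decomp[of "U1 \<inter> V2"] fS1 fA1 unfolding S1_def S2_def A1_def A2_def SV_Int AV_Int by simp
  have IJ: "card (U1 \<inter> V2) \<le> J" unfolding J_def using U1 finV1 by (intro card_mono) auto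
  have a1n: "card A1 \<le> 2 * hh" using card_mono[OF _ A1n] n by simp
  have a2n: "card A2 \<le> 2 * hh" using card_mono[OF _ A2n] n by simp
  have aa: "card A1 + card A2 \<le> 2 * hh + card (A1 \<inter> A2)"
  proof -
    have "card (A1 \<union> A2) \<le> 2 * hh" using card_mono[of "{0..<card VB}" "A1 \<union> A2"] A1n A2n n by simp
    then show ?thesis using card_Un_Int[OF fA1 fA2] by simp
  qed
  have cJ1: "3 * (card (A1 \<inter> A2) + card (S1 \<inter> S2)) \<le> 2 * (card A1 + card S1)"
  proof (cases "s1 \<le> K")
    case True then show ?thesis using IJ cI J1 cU1 unfolding \<sigma>_def by simp
  next
    case False then show ?thesis using IJ cI big cU1 unfolding \<sigma>_def K_def by simp
  qed
  have cJ2: "3 * (card (A1 \<inter> A2) + card (S1 \<inter> S2)) \<le> 2 * (card A2 + card S2)"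
    using IJ cI J2 cV2 by simp
  have cord: "card A2 + card S2 \<le> card A1 + card S1"
  proof (cases "s1 \<le> K")
    case True then show ?thesis using ord' cU1 cV2 unfolding \<sigma>_def by simp
  next
    case False then show ?thesis using big cU1 cV2 unfolding \<sigma>_def K_def by simp
  qed
  have ctop: "card A1 + card S1 \<le> 3 * hh" using cU1 unfolding \<sigma>_def K_def by simp
  have ctc: "t = 0 \<or> (card A1 + card S1 = 3 * hh \<and> 3 * t + card A2 + card S2 \<le> 3 * hh)"
  proof (cases "s1 \<le> K")
    case True then show ?thesis unfolding t_def \<sigma>_def by simp
  next
    case False
    have tK: "t + 3*hh = s1" using False unfolding t_def \<sigma>_def K_def by simp
    have sK: "card A1 + card S1 = 3*hh" using cU1 False unfolding \<sigma>_def K_def by simp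
    have "s2 + 3 * s1 \<le> 12 * hh" using big False by simp
    then have "3 * t + card A2 + card S2 \<le> 3 * hh" using tK cV2 by linarith
    then show ?thesis using sK by simp
  qed
  obtain H where HV: "H \<subseteq> VB" and cH: "card H = hh"
    and core: "2*(card (H - S1) + card (VB - H - S2)) + 3*(card A1 + card S1 + card A2 + card S2 + t) \<le> 18*hh"
    using core[OF finVB n S1VB S2VB a1n a2n aa cJ1 cJ2 cord ctop ctc] by blast
  define H' where "H' = VB - H"
  have fH: "finite H" using HV finVB finite_subset by blast
  have cH': "card H' = hh" unfolding H'_def using card_Diff_subset[OF fH HV] n cH by simp
  have fH': "finite H'" unfolding H'_def using finVB by simp
  define w1 where "w1 = card (H - S1)"
  define w2 where "w2 = card (H' - S2)"
  have core': "2 * (w1 + w2) + 3 * (s1 + s2) \<le> 18 * hh"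
    using core cU1 cV2 unfolding w1_def w2_def H'_def t_def \<sigma>_def by simp
  have NH: "NE EB H \<le> NE EB S1 + w1 * hh"
  proof -
    have "NE EB H \<le> NE EB (H \<inter> S1) + card (H - S1) * card H" using NE_split[OF fH] .
    moreover have "NE EB (H \<inter> S1) \<le> NE EB S1" by (rule NE_mono[OF fS1]) auto
    ultimately show ?thesis unfolding w1_def cH by simp
  qed
  have NH': "NE EB H' \<le> NE EB S2 + w2 * hh"
  proof -
    have "NE EB H' \<le> NE EB (H' \<inter> S2) + card (H' - S2) * card H'" using NE_split[OF fH'] .
    moreover have "NE EB (H' \<inter> S2) \<le> NE EB S2" by (rule NE_mono[OF fS2]) auto
    ultimately show ?thesis unfolding w2_def cH' by simp
  qed
  have m: "card EB = card (induced_edges EB H) + card (induced_edges EB H') + cut_edges EB H H'"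
    using cut_eq[OF sg HV] unfolding H'_def .
  have eH: "card (induced_edges EB H) + NE EB H = hh choose 2" using induced_NE[OF sg HV] cH by simp
  have eH': "card (induced_edges EB H') + NE EB H' = hh choose 2" using induced_NE[OF sg, of H'] cH' unfolding H'_def by auto
  have E1': "card (induced_edges ?cE U1) + NE EB S1 = \<sigma> choose 2"
    using constr_edges[OF sg U1sub] U1 unfolding S1_def by simp
  have E2: "card (induced_edges ?cE V2) + NE EB S2 = s2 choose 2"
    using constr_edges[OF sg sub2] unfolding S2_def s2_def by simp
  define R where "R = real hh"
  define d1 where "d1 = density ?cE V1"
  define d2 where "d2 = density ?cE V2"
  have s1pos: "s1 > 0" using ne1 finV1 unfolding s1_def by (simp add: card_gt_0_iff)
  have s2pos: "s2 > 0" using ne2 finV2 unfolding s2_def by (simp add: card_gt_0_iff)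
  have D1: "3 * R * d1 \<le> 3 * R * (real s1 - 1) / 2 - real (NE EB S1)"
  proof (cases "s1 \<le> K")
    case True
    then have "U1 = V1" "\<sigma> = s1" using same unfolding \<sigma>_def by auto
    then have "real (card (induced_edges ?cE V1)) + real (NE EB S1) = real s1 * (real s1 - 1) / 2"
      using arg_cong[OF E1', of real] unfolding real_choose2 by simp
    from dens_bound1[OF _ this _ ] True s1pos
    show ?thesis unfolding d1_def density_def s1_def[symmetric] R_def K_def by simp
  next
    case False
    then have sK: "\<sigma> = K" unfolding \<sigma>_def by simp
    have th: "real (card (induced_edges ?cE V1)) * (real K * (real K - 1)) \<le> real (card (induced_edges ?cE U1)) * (real s1 * (real s1 - 1))"
    proof -
      have "real (card (induced_edges ?cE V1) * (K * (K - 1))) \<le> real (card (induced_edges ?cE U1) * (s1 * (s1 - 1)))"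
        using thinc False by linarith
      then show ?thesis using K2 s1pos by (simp add: of_nat_diff)
    qed
    have x': "real (card (induced_edges ?cE U1)) + real (NE EB S1) = real K * (real K - 1) / 2"
      using arg_cong[OF E1', of real] sK unfolding real_choose2 by simp
    have "real K * (real (card (induced_edges ?cE V1)) / real s1) \<le> real K * (real s1 - 1) / 2 - real (NE EB S1)"
      by (rule dens_bound2[OF _ _ _ th x']) (use K2 False in auto)
    then show ?thesis unfolding d1_def density_def s1_def[symmetric] R_def K_def by simp
  qed
  have D2: "3 * R * d2 \<le> 3 * R * (real s2 - 1) / 2 - real (NE EB S2)"
  proof -
    have s2K: "s2 \<le> K"
    proof (cases "s1 \<le> K")
      case True then show ?thesis using ord' by simp
    next
      case False then show ?thesis using big unfolding K_def by simp
    qed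
    have "real (card (induced_edges ?cE V2)) + real (NE EB S2) = real s2 * (real s2 - 1) / 2"
      using arg_cong[OF E2, of real] unfolding real_choose2 by simp
    from dens_bound1[OF _ this _ ] s2K s2pos
    show ?thesis unfolding d2_def density_def s2_def[symmetric] R_def K_def by simp
  qed
  have Rpos: "R > 0" using hh1 unfolding R_def by simp
  have dens': "8 * (R * R) - 2 * R + real (card EB) - real h \<le> 3 * (R * d1) + 3 * (R * d2)"
  proof -
    have "(2 * real (card VB)^2 - real (card VB) + real (card EB) - real h) / (3 * R) \<le> d1 + d2"
      using dens n unfolding d1_def d2_def R_def by simp
    then have "2 * real (card VB)^2 - real (card VB) + real (card EB) - real h \<le> (d1 + d2) * (3 * R)"
      using Rpos by (simp add: pos_divide_le_eq)
    then show ?thesis using n unfolding R_def by (simp add: algebra_simps power2_eq_square)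
  qed
  have rm: "real (card EB) = real (card (induced_edges EB H)) + real (card (induced_edges EB H')) + real (cut_edges EB H H')"
    using arg_cong[OF m, of real] by simp
  have reH: "real (card (induced_edges EB H)) + real (NE EB H) = R * R / 2 - R / 2"
    using arg_cong[OF eH, of real] unfolding real_choose2 R_def by (simp add: algebra_simps)
  have reH': "real (card (induced_edges EB H')) + real (NE EB H') = R * R / 2 - R / 2"
    using arg_cong[OF eH', of real] unfolding real_choose2 R_def by (simp add: algebra_simps)
  have rNH: "real (NE EB H) \<le> real (NE EB S1) + R * real w1"
  proof -
    have "real (NE EB H) \<le> real (NE EB S1 + w1 * hh)" using NH by (simp only: of_nat_le_iff)
    then show ?thesis unfolding R_def by (simp add: mult.commute)
  qed
  have rNH': "real (NE EB H') \<le> real (NE EB S2) + R * real w2"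
  proof -
    have "real (NE EB H') \<le> real (NE EB S2 + w2 * hh)" using NH' by (simp only: of_nat_le_iff)
    then show ?thesis unfolding R_def by (simp add: mult.commute)
  qed
  have rcore: "2 * (R * real w1) + 2 * (R * real w2) + 3 * (R * real s1) + 3 * (R * real s2) \<le> 18 * (R * R)"
  proof -
    have "real (2 * (w1 + w2) + 3 * (s1 + s2)) \<le> real (18 * hh)" using core' by linarith
    then have "R * real (2 * (w1 + w2) + 3 * (s1 + s2)) \<le> R * real (18 * hh)" using Rpos by simp
    then show ?thesis unfolding R_def by (simp add: algebra_simps)
  qed
  have D1': "3 * (R * d1) \<le> 3 / 2 * (R * real s1) - 3 / 2 * R - real (NE EB S1)" using D1 by (simp add: algebra_simps)
  have D2': "3 * (R * d2) \<le> 3 / 2 * (R * real s2) - 3 / 2 * R - real (NE EB S2)" using D2 by (simp add: algebra_simps)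
  have "real (cut_edges EB H H') \<le> real h"
    using dens' D1' D2' rm reH reH' rNH rNH' rcore by linarith
  then have cut: "cut_edges EB H H' \<le> h" by simp
  have "H \<noteq> {}" using cH hh1 by auto
  moreover have "H' \<noteq> {}" using cH' hh1 by auto
  ultimately show ?thesis using cut cH cH' HV unfolding H'_def
    by (intro exI[of _ H] exI[of _ "VB - H"]) auto
qed



theorem theorem21:
  fixes VB :: "'a set" and EB :: "'a set set" and h :: nat
  assumes "simple_graph VB EB"
    and "even (card VB)"
  shows "(\<exists>VB1 VB2. VB1 \<union> VB2 = VB \<and> VB1 \<inter> VB2 = {} \<and> VB1 \<noteq> {} \<and> VB2 \<noteq> {} \<and>
            card VB1 = card VB2 \<and> cut_edges EB VB1 VB2 \<le> h)
     \<longleftrightarrow>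
     (\<exists>V1 V2. feasible_2ods (constr_V VB) (2/3) V1 V2 \<and>
        density (constr_E VB EB) V1 + density (constr_E VB EB) V2
          \<ge> (2 * real (card VB)^2 - real (card VB) + real (card EB) - real h)
              / (3/2 * real (card VB)))"
proof
  assume "\<exists>VB1 VB2. VB1 \<union> VB2 = VB \<and> VB1 \<inter> VB2 = {} \<and> VB1 \<noteq> {} \<and> VB2 \<noteq> {} \<and>
            card VB1 = card VB2 \<and> cut_edges EB VB1 VB2 \<le> h"
  then obtain VB1 VB2 where "VB1 \<union> VB2 = VB" "VB1 \<inter> VB2 = {}" "VB1 \<noteq> {}" "VB2 \<noteq> {}"
    "card VB1 = card VB2" "cut_edges EB VB1 VB2 \<le> h" by blast
  then show "\<exists>V1 V2. feasible_2ods (constr_V VB) (2/3) V1 V2 \<and>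
        density (constr_E VB EB) V1 + density (constr_E VB EB) V2
          \<ge> (2 * real (card VB)^2 - real (card VB) + real (card EB) - real h)
              / (3/2 * real (card VB))"
    using fwd[OF assms(1)] by blast
next
  assume "\<exists>V1 V2. feasible_2ods (constr_V VB) (2/3) V1 V2 \<and>
        density (constr_E VB EB) V1 + density (constr_E VB EB) V2
          \<ge> (2 * real (card VB)^2 - real (card VB) + real (card EB) - real h)
              / (3/2 * real (card VB))"
  then obtain V1 V2 where fe: "feasible_2ods (constr_V VB) (2/3) V1 V2"
    and d: "density (constr_E VB EB) V1 + density (constr_E VB EB) V2
          \<ge> (2 * real (card VB)^2 - real (card VB) + real (card EB) - real h)
              / (3/2 * real (card VB))" by blast
  show "\<exists>VB1 VB2. VB1 \<union> VB2 = VB \<and> VB1 \<inter> VB2 = {} \<and> VB1 \<noteq> {} \<and> VB2 \<noteq> {} \<and>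
            card VB1 = card VB2 \<and> cut_edges EB VB1 VB2 \<le> h"
  proof (cases "card V2 \<le> card V1")
    case True then show ?thesis using rev_dir[OF assms fe True d] by blast
  next
    case False
    have fe': "feasible_2ods (constr_V VB) (2/3) V2 V1" using fe unfolding feasible_2ods_def by (auto simp: Int_commute)
    have d': "density (constr_E VB EB) V2 + density (constr_E VB EB) V1
          \<ge> (2 * real (card VB)^2 - real (card VB) + real (card EB) - real h)
              / (3/2 * real (card VB))" using d by (simp add: add.commute)
    show ?thesis using rev_dir[OF assms fe' _ d'] False by simp
  qed
qed

end
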